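(* Let $(\dot E,\Lambda)$ be a B-hypergraph. Then $(\mathrm{AT}(\dot E,\Lambda),\le)$ is a lattice: $\le$ is a partial order and any two admissible triples have a supremum and an infimum.
   Context: A graph $E=(E^0,E^1,r,s)$. A bi-separated graph with distinguished subsets is $\dot E=(E,(C,S),(D,T))$: $C=\bigsqcup_v C_v$ with $C_v$ a partition of $s^{-1}(v)$ into nonempty sets for each non-sink $v$; $D=\bigsqcup_v D_v$ with $D_v$ a partition of $r^{-1}(v)$ for each non-source $v$; $|X\cap Y|\le 1$ for $X\in C$, $Y\in D$; $C_{\rm fin},D_{\rm fin}$ the finite members, $S\subseteq C_{\rm fin}$, $T\subseteq D_{\rm fin}$. For $X\in C$, $s(X)$ is the common source of its edges; for $Y\in D$, $r(Y)$ the common range. A B-hypergraph is a pair $(\dot E,\Lambda)$ with $\Lambda$ a nonempty set and, for each $\lambda\in\Lambda$, subsets $\mathcal X_\lambda\subseteq C$, $\mathcal Y_\lambda\subseteq D$, such that: (i) $X\notin S$, $Y\notin T$ implies $X\cap Y=\emptyset$; (ii) $\alpha\ne\beta$, $X\in\mathcal X_\alpha$, $Y\in\mathcal Y_\beta$ implies $X\cap Y=\emptyset$; (iii) $X\in\mathcal X_\lambda$, $Y\in\mathcal Y_\lambda$ implies $X\cap Y\ne\emptyset$; (iv) $\Lambda=\Lambda_T^S\sqcup\Lambda^S_{\rm fin}\sqcup\Lambda^S_\infty\sqcup\Lambda_T^{\rm fin}\sqcup\Lambda_T^\infty$ such that, with $\Lambda^S=\Lambda_T^S\sqcup\Lambda^S_{\rm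 fin}\sqcup\Lambda^S_\infty$ and $\Lambda_T=\Lambda_T^S\sqcup\Lambda_T^{\rm fin}\sqcup\Lambda_T^\infty$: $S=\bigsqcup_{\lambda\in\Lambda^S}\mathcal X_\lambda$, $T=\bigsqcup_{\lambda\in\Lambda_T}\mathcal Y_\lambda$, $C_{\rm fin}\setminus S=\bigsqcup_{\lambda\in\Lambda_T^{\rm fin}}\mathcal X_\lambda$, $D_{\rm fin}\setminus T=\bigsqcup_{\lambda\in\Lambda^S_{\rm fin}}\mathcal Y_\lambda$, $C\setminus C_{\rm fin}=\bigsqcup_{\lambda\in\Lambda_T^\infty}\mathcal X_\lambda$, $D\setminus D_{\rm fin}=\bigsqcup_{\lambda\in\Lambda^S_\infty}\mathcal Y_\lambda$. For $\lambda\in\Lambda$, $s(\lambda)=\{s(X):X\in\mathcal X_\lambda\}$, $r(\lambda)=\{r(Y):Y\in\mathcal Y_\lambda\}$. A subset $V\subseteq E^0$ is bisaturated if for every $\lambda\in\Lambda_T^S$: $s(\lambda)\subseteq V\iff r(\lambda)\subseteq V$. For bisaturated $V$ and $\lambda\in\Lambda$, let $\mathcal X_{\lambda/V}=\{X\in\mathcal X_\lambda: s(X)\notin V\}$, $\mathcal Y_{\lambda/V}=\{Y\in\mathcal Y_\lambda: r(Y)\notin V\}$, and define $\Lambda_T^S/V=\{\lambda\in\Lambda_T^S: \mathcal X_{\lambda/V}\ne\emptyset\}$, $\Lambda^S_{\rm fin}/V=\{\lambda\in\Lambda^S_{\rm fin}:\mathcal X_{\lambda/V}\ne\emptyset\}$,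 $\Lambda^S_\infty/V=\{\lambda\in\Lambda^S_\infty: 0<|\mathcal X_{\lambda/V}|<\infty\}$, $\Lambda_T^{\rm fin}/V=\{\lambda\in\Lambda_T^{\rm fin}:\mathcal Y_{\lambda/V}\ne\emptyset\}$, $\Lambda_T^\infty/V=\{\lambda\in\Lambda_T^\infty:0<|\mathcal Y_{\lambda/V}|<\infty\}$, $\Lambda/V$ their union, $\Lambda^S(V)=\Lambda^S\setminus\Lambda/V$, $\Lambda_T(V)=\Lambda_T\setminus\Lambda/V$. An admissible triple is $(V,\Sigma,\Theta)$ with $V$ bisaturated, $\Sigma\subseteq\Lambda^S_{\rm fin}/V\sqcup\Lambda^S_\infty/V$, $\Theta\subseteq\Lambda_T^{\rm fin}/V\sqcup\Lambda_T^\infty/V$; $\mathrm{AT}(\dot E,\Lambda)$ is the set of them. Define $(V_1,\Sigma_1,\Theta_1)\le(V_2,\Sigma_2,\Theta_2)$ iff $V_1\subseteq V_2$, $\Sigma_1\subseteq\Sigma_2\sqcup\Lambda^S(V_2)$ and $\Theta_1\subseteq\Theta_2\sqcup\Lambda_T(V_2)$. *)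

theory Defs
  imports "HOL-Algebra.Lattice" "HOL-Library.Disjoint_Sets"
begin

text \<open>The five parts of the index set Lambda:
  KTS = Lambda_T^S, KSfin = Lambda^S_fin, KSinf = Lambda^S_infty,
  KTfin = Lambda_T^fin, KTinf = Lambda_T^infty.\<close>
datatype lkind = KTS | KSfin | KSinf | KTfin | KTinf

record ('v, 'e, 'l) bhyp =
  bh_V :: "'v set"
  bh_E :: "'e set"
  bh_r :: "'e \<Rightarrow> 'v"
  bh_s :: "'e \<Rightarrow> 'v"
  bh_C :: "'e set set"
  bh_S :: "'e set set"
  bh_D :: "'e set set"
  bh_T :: "'e set set"
  bh_Lam :: "'l set"
  bh_X :: "'l \<Rightarrow> 'e set set"
  bh_Y :: "'l \<Rightarrow> 'e set set"
  bh_kind :: "'l \<Rightarrow> lkind"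

definition bh_Cfin :: "('v,'e,'l) bhyp \<Rightarrow> 'e set set" where
  "bh_Cfin H = {X \<in> bh_C H. finite X}"

definition bh_Dfin :: "('v,'e,'l) bhyp \<Rightarrow> 'e set set" where
  "bh_Dfin H = {Y \<in> bh_D H. finite Y}"

definition bsrc :: "('v,'e,'l) bhyp \<Rightarrow> 'e set \<Rightarrow> 'v" where
  "bsrc H X = the_elem (bh_s H ` X)"

definition brng :: "('v,'e,'l) bhyp \<Rightarrow> 'e set \<Rightarrow> 'v" where
  "brng H Y = the_elem (bh_r H ` Y)"

definition lam_of :: "('v,'e,'l) bhyp \<Rightarrow> lkind set \<Rightarrow> 'l set" where
  "lam_of H K = {l \<in> bh_Lam H. bh_kind H l \<in> K}"

abbreviation "LamS H \<equiv> lam_of H {KTS, KSfin, KSinf}"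
abbreviation "LamT H \<equiv> lam_of H {KTS, KTfin, KTinf}"

definition disj_union :: "'l set \<Rightarrow> ('l \<Rightarrow> 'e set set) \<Rightarrow> 'e set set \<Rightarrow> bool" where
  "disj_union I A B \<longleftrightarrow> disjoint_family_on A I \<and> B = (\<Union>l\<in>I. A l)"

definition B_hypergraph :: "('v,'e,'l) bhyp \<Rightarrow> bool" where
  "B_hypergraph H \<longleftrightarrow>
     \<comment> \<open>graph\<close>
     (\<forall>e\<in>bh_E H. bh_r H e \<in> bh_V H \<and> bh_s H e \<in> bh_V H) \<and>
     \<comment> \<open>C = disjoint union of C_v, C_v a partition of s^{-1}(v), v non-sink\<close>
     (\<exists>Cv. (\<forall>v\<in>bh_V H. {e\<in>bh_E H. bh_s H e = v} \<noteq> {} \<longrightarrow>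
                partition_on {e\<in>bh_E H. bh_s H e = v} (Cv v)) \<and>
           bh_C H = (\<Union>v\<in>{v\<in>bh_V H. {e\<in>bh_E H. bh_s H e = v} \<noteq> {}}. Cv v)) \<and>
     \<comment> \<open>D = disjoint union of D_v, D_v a partition of r^{-1}(v), v non-source\<close>
     (\<exists>Dv. (\<forall>v\<in>bh_V H. {e\<in>bh_E H. bh_r H e = v} \<noteq> {} \<longrightarrow>
                partition_on {e\<in>bh_E H. bh_r H e = v} (Dv v)) \<and>
           bh_D H = (\<Union>v\<in>{v\<in>bh_V H. {e\<in>bh_E H. bh_r H e = v} \<noteq> {}}. Dv v)) \<and>
     (\<forall>X\<in>bh_C H. \<forall>Y\<in>bh_D H. card (X \<inter> Y) \<le> 1 \<and> finite (X \<inter> Y)) \<and>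
     bh_S H \<subseteq> bh_Cfin H \<and> bh_T H \<subseteq> bh_Dfin H \<and>
     \<comment> \<open>hypergraph data\<close>
     bh_Lam H \<noteq> {} \<and>
     (\<forall>l\<in>bh_Lam H. bh_X H l \<subseteq> bh_C H \<and> bh_Y H l \<subseteq> bh_D H) \<and>
     \<comment> \<open>(i)\<close>
     (\<forall>X\<in>bh_C H. \<forall>Y\<in>bh_D H. X \<notin> bh_S H \<and> Y \<notin> bh_T H \<longrightarrow> X \<inter> Y = {}) \<and>
     \<comment> \<open>(ii)\<close>
     (\<forall>a\<in>bh_Lam H. \<forall>b\<in>bh_Lam H. a \<noteq> b \<longrightarrow>
        (\<forall>X\<in>bh_X H a. \<forall>Y\<in>bh_Y H b. X \<inter> Y = {})) \<and>
     \<comment> \<open>(iii)\<close>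
     (\<forall>l\<in>bh_Lam H. \<forall>X\<in>bh_X H l. \<forall>Y\<in>bh_Y H l. X \<inter> Y \<noteq> {}) \<and>
     \<comment> \<open>(iv)\<close>
     disj_union (LamS H) (bh_X H) (bh_S H) \<and>
     disj_union (LamT H) (bh_Y H) (bh_T H) \<and>
     disj_union (lam_of H {KTfin}) (bh_X H) (bh_Cfin H - bh_S H) \<and>
     disj_union (lam_of H {KSfin}) (bh_Y H) (bh_Dfin H - bh_T H) \<and>
     disj_union (lam_of H {KTinf}) (bh_X H) (bh_C H - bh_Cfin H) \<and>
     disj_union (lam_of H {KSinf}) (bh_Y H) (bh_D H - bh_Dfin H)"

definition lam_src :: "('v,'e,'l) bhyp \<Rightarrow> 'l \<Rightarrow> 'v set" where
  "lam_src H l = bsrc H ` bh_X H l"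

definition lam_rng :: "('v,'e,'l) bhyp \<Rightarrow> 'l \<Rightarrow> 'v set" where
  "lam_rng H l = brng H ` bh_Y H l"

definition bisaturated :: "('v,'e,'l) bhyp \<Rightarrow> 'v set \<Rightarrow> bool" where
  "bisaturated H V \<longleftrightarrow> V \<subseteq> bh_V H \<and>
     (\<forall>l\<in>lam_of H {KTS}. lam_src H l \<subseteq> V \<longleftrightarrow> lam_rng H l \<subseteq> V)"

definition Xq :: "('v,'e,'l) bhyp \<Rightarrow> 'l \<Rightarrow> 'v set \<Rightarrow> 'e set set" where
  "Xq H l V = {X \<in> bh_X H l. bsrc H X \<notin> V}"

definition Yq :: "('v,'e,'l) bhyp \<Rightarrow> 'l \<Rightarrow> 'v set \<Rightarrow> 'e set set" where
  "Yq H l V = {Y \<in> bh_Y H l. brng H Y \<notin> V}"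

text \<open>Lambda/V restricted to the kinds in K.\<close>
definition LamQ :: "('v,'e,'l) bhyp \<Rightarrow> lkind set \<Rightarrow> 'v set \<Rightarrow> 'l set" where
  "LamQ H K V = {l \<in> lam_of H K.
      (bh_kind H l = KTS \<and> Xq H l V \<noteq> {}) \<or>
      (bh_kind H l = KSfin \<and> Xq H l V \<noteq> {}) \<or>
      (bh_kind H l = KSinf \<and> 0 < card (Xq H l V) \<and> finite (Xq H l V)) \<or>
      (bh_kind H l = KTfin \<and> Yq H l V \<noteq> {}) \<or>
      (bh_kind H l = KTinf \<and> 0 < card (Yq H l V) \<and> finite (Yq H l V))}"

abbreviation "LamAll \<equiv> {KTS, KSfin, KSinf, KTfin, KTinf}"

definition LamS_V :: "('v,'e,'l) bhyp \<Rightarrow> 'v set \<Rightarrow> 'l set" where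
  "LamS_V H V = LamS H - LamQ H LamAll V"

definition LamT_V :: "('v,'e,'l) bhyp \<Rightarrow> 'v set \<Rightarrow> 'l set" where
  "LamT_V H V = LamT H - LamQ H LamAll V"

definition AT :: "('v,'e,'l) bhyp \<Rightarrow> ('v set \<times> 'l set \<times> 'l set) set" where
  "AT H = {(V, Sg, Th). bisaturated H V \<and>
             Sg \<subseteq> LamQ H {KSfin, KSinf} V \<and> Th \<subseteq> LamQ H {KTfin, KTinf} V}"

definition at_le :: "('v,'e,'l) bhyp \<Rightarrow> ('v set \<times> 'l set \<times> 'l set) \<Rightarrow> ('v set \<times> 'l set \<times> 'l set) \<Rightarrow> bool" where
  "at_le H a b = (case a of (V1, S1, T1) \<Rightarrow> case b of (V2, S2, T2) \<Rightarrow>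
      V1 \<subseteq> V2 \<and> S1 \<subseteq> S2 \<union> LamS_V H V2 \<and> T1 \<subseteq> T2 \<union> LamT_V H V2)"

definition AT_order :: "('v,'e,'l) bhyp \<Rightarrow> ('v set \<times> 'l set \<times> 'l set) gorder" where
  "AT_order H = \<lparr>carrier = AT H, eq = (=), le = at_le H\<rparr>"

end

theory Submission
  imports Defs
begin

lemma src_in:
  assumes "B_hypergraph H" "X \<in> bh_C H"
  shows "bsrc H X \<in> bh_V H"
proof -
  have "\<exists>Cv. (\<forall>v\<in>bh_V H. {e\<in>bh_E H. bh_s H e = v} \<noteq> {} \<longrightarrow>
                partition_on {e\<in>bh_E H. bh_s H e = v} (Cv v)) \<and>
           bh_C H = (\<Union>v\<in>{v\<in>bh_V H. {e\<in>bh_E H. bh_s H e = v} \<noteq> {}}. Cv v)"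
    using assms(1) unfolding B_hypergraph_def by (elim conjE) assumption
  then obtain Cv where
    P: "\<forall>v\<in>bh_V H. {e\<in>bh_E H. bh_s H e = v} \<noteq> {} \<longrightarrow>
                partition_on {e\<in>bh_E H. bh_s H e = v} (Cv v)"
    and C: "bh_C H = (\<Union>v\<in>{v\<in>bh_V H. {e\<in>bh_E H. bh_s H e = v} \<noteq> {}}. Cv v)"
    by blast
  from assms(2) C obtain v where v: "v \<in> bh_V H" "{e\<in>bh_E H. bh_s H e = v} \<noteq> {}" "X \<in> Cv v"
    by blast
  with P have pp: "partition_on {e\<in>bh_E H. bh_s H e = v} (Cv v)" by blast
  have "X \<noteq> {}" "X \<subseteq> {e\<in>bh_E H. bh_s H e = v}"
    using pp v(3) unfolding partition_on_def by auto
  then have "bh_s H ` X = {v}" by auto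
  then show ?thesis using v(1) by (simp add: bsrc_def)
qed

lemma rng_in:
  assumes "B_hypergraph H" "Y \<in> bh_D H"
  shows "brng H Y \<in> bh_V H"
proof -
  have "\<exists>Dv. (\<forall>v\<in>bh_V H. {e\<in>bh_E H. bh_r H e = v} \<noteq> {} \<longrightarrow>
                partition_on {e\<in>bh_E H. bh_r H e = v} (Dv v)) \<and>
           bh_D H = (\<Union>v\<in>{v\<in>bh_V H. {e\<in>bh_E H. bh_r H e = v} \<noteq> {}}. Dv v)"
    using assms(1) unfolding B_hypergraph_def by (elim conjE) assumption
  then obtain Dv where
    P: "\<forall>v\<in>bh_V H. {e\<in>bh_E H. bh_r H e = v} \<noteq> {} \<longrightarrow>
                partition_on {e\<in>bh_E H. bh_r H e = v} (Dv v)"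
    and C: "bh_D H = (\<Union>v\<in>{v\<in>bh_V H. {e\<in>bh_E H. bh_r H e = v} \<noteq> {}}. Dv v)"
    by blast
  from assms(2) C obtain v where v: "v \<in> bh_V H" "{e\<in>bh_E H. bh_r H e = v} \<noteq> {}" "Y \<in> Dv v"
    by blast
  with P have pp: "partition_on {e\<in>bh_E H. bh_r H e = v} (Dv v)" by blast
  have "Y \<noteq> {}" "Y \<subseteq> {e\<in>bh_E H. bh_r H e = v}"
    using pp v(3) unfolding partition_on_def by auto
  then have "bh_r H ` Y = {v}" by auto
  then show ?thesis using v(1) by (simp add: brng_def)
qed

lemma V_bisat:
  assumes "B_hypergraph H"
  shows "bisaturated H (bh_V H)"
proof -
  have "\<forall>l\<in>bh_Lam H. bh_X H l \<subseteq> bh_C H \<and> bh_Y H l \<subseteq> bh_D H"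
    using assms unfolding B_hypergraph_def by (elim conjE) assumption
  then have "\<forall>l\<in>bh_Lam H. lam_src H l \<subseteq> bh_V H \<and> lam_rng H l \<subseteq> bh_V H"
    unfolding lam_src_def lam_rng_def using src_in[OF assms] rng_in[OF assms] by blast
  then show ?thesis unfolding bisaturated_def lam_of_def by auto
qed

lemma bisat_Inter:
  assumes "F \<noteq> {}" "\<forall>V\<in>F. bisaturated H V"
  shows "bisaturated H (\<Inter>F)"
  using assms unfolding bisaturated_def by blast

lemma bisat_Int:
  assumes "bisaturated H A" "bisaturated H B"
  shows "bisaturated H (A \<inter> B)"
  using assms unfolding bisaturated_def by blast

lemma Xq_anti: "V \<subseteq> W \<Longrightarrow> Xq H l W \<subseteq> Xq H l V"
  unfolding Xq_def by blast

lemma Yq_anti: "V \<subseteq> W \<Longrightarrow> Yq H l W \<subseteq> Yq H l V"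
  unfolding Yq_def by blast

lemma keyS:
  assumes "l \<in> LamQ H {KSfin, KSinf} V1" "V1 \<subseteq> V2" "V2 \<subseteq> V3" "l \<in> LamS_V H V2"
  shows "l \<in> LamS_V H V3"
proof -
  have k: "bh_kind H l = KSfin \<or> bh_kind H l = KSinf" "l \<in> bh_Lam H"
    using assms(1) unfolding LamQ_def lam_of_def by auto
  have f1: "bh_kind H l = KSinf \<Longrightarrow> finite (Xq H l V1)"
    using assms(1) unfolding LamQ_def by auto
  have n2: "l \<notin> LamQ H LamAll V2" using assms(4) unfolding LamS_V_def by auto
  have e2: "Xq H l V2 = {}"
  proof (cases "bh_kind H l = KSfin")
    case True then show ?thesis using n2 k unfolding LamQ_def lam_of_def by auto
  next
    case False
    then have ks: "bh_kind H l = KSinf" using k by auto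
    have "finite (Xq H l V2)" by (rule finite_subset[OF Xq_anti[of V1 V2 H l, OF assms(2)] f1[OF ks]])
    then show ?thesis using n2 k ks unfolding LamQ_def lam_of_def by auto
  qed
  have "Xq H l V3 = {}" using e2 Xq_anti[of V2 V3 H l, OF assms(3)] by blast
  then have "l \<notin> LamQ H LamAll V3" using k unfolding LamQ_def lam_of_def by auto
  then show ?thesis using assms(4) unfolding LamS_V_def by auto
qed

lemma keyT:
  assumes "l \<in> LamQ H {KTfin, KTinf} V1" "V1 \<subseteq> V2" "V2 \<subseteq> V3" "l \<in> LamT_V H V2"
  shows "l \<in> LamT_V H V3"
proof -
  have k: "bh_kind H l = KTfin \<or> bh_kind H l = KTinf" "l \<in> bh_Lam H"
    using assms(1) unfolding LamQ_def lam_of_def by auto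
  have f1: "bh_kind H l = KTinf \<Longrightarrow> finite (Yq H l V1)"
    using assms(1) unfolding LamQ_def by auto
  have n2: "l \<notin> LamQ H LamAll V2" using assms(4) unfolding LamT_V_def by auto
  have e2: "Yq H l V2 = {}"
  proof (cases "bh_kind H l = KTfin")
    case True then show ?thesis using n2 k unfolding LamQ_def lam_of_def by auto
  next
    case False
    then have ks: "bh_kind H l = KTinf" using k by auto
    have "finite (Yq H l V2)" by (rule finite_subset[OF Yq_anti[of V1 V2 H l, OF assms(2)] f1[OF ks]])
    then show ?thesis using n2 k ks unfolding LamQ_def lam_of_def by auto
  qed
  have "Yq H l V3 = {}" using e2 Yq_anti[of V2 V3 H l, OF assms(3)] by blast
  then have "l \<notin> LamQ H LamAll V3" using k unfolding LamQ_def lam_of_def by auto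
  then show ?thesis using assms(4) unfolding LamT_V_def by auto
qed

lemma at_le_simp:
  "at_le H (V1, S1, T1) (V2, S2, T2) \<longleftrightarrow>
     V1 \<subseteq> V2 \<and> S1 \<subseteq> S2 \<union> LamS_V H V2 \<and> T1 \<subseteq> T2 \<union> LamT_V H V2"
  by (simp add: at_le_def)

lemma AT_simp:
  "(V, S, T) \<in> AT H \<longleftrightarrow> bisaturated H V \<and> S \<subseteq> LamQ H {KSfin, KSinf} V \<and> T \<subseteq> LamQ H {KTfin, KTinf} V"
  by (simp add: AT_def)

lemma QS_disj: "LamQ H K V \<inter> LamS_V H V = {}" "LamQ H K V \<inter> LamT_V H V = {}"
  unfolding LamS_V_def LamT_V_def LamQ_def lam_of_def by auto

lemma QS_kind: "l \<in> LamQ H {KSfin, KSinf} V \<Longrightarrow> l \<notin> LamQ H {KSfin, KSinf} W \<Longrightarrow> l \<in> LamS_V H W"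
  unfolding LamS_V_def LamQ_def lam_of_def by auto

lemma QT_kind: "l \<in> LamQ H {KTfin, KTinf} V \<Longrightarrow> l \<notin> LamQ H {KTfin, KTinf} W \<Longrightarrow> l \<in> LamT_V H W"
  unfolding LamT_V_def LamQ_def lam_of_def by auto

lemma po: "partial_order (AT_order H)"
proof
  show "x .=\<^bsub>AT_order H\<^esub> x" for x by (simp add: AT_order_def)
  show "y .=\<^bsub>AT_order H\<^esub> x" if "x .=\<^bsub>AT_order H\<^esub> y" for x y
    using that by (simp add: AT_order_def)
  show "x .=\<^bsub>AT_order H\<^esub> z" if "x .=\<^bsub>AT_order H\<^esub> y" "y .=\<^bsub>AT_order H\<^esub> z" for x y z
    using that by (simp add: AT_order_def)
  show "x \<sqsubseteq>\<^bsub>AT_order H\<^esub> x" for x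
    by (cases x) (auto simp add: AT_order_def at_le_simp)
  show "x .=\<^bsub>AT_order H\<^esub> y" if "x \<sqsubseteq>\<^bsub>AT_order H\<^esub> y" "y \<sqsubseteq>\<^bsub>AT_order H\<^esub> x"
    "x \<in> carrier (AT_order H)" "y \<in> carrier (AT_order H)" for x y
  proof -
    obtain V1 S1 T1 V2 S2 T2 where xy: "x = (V1, S1, T1)" "y = (V2, S2, T2)" by (cases x, cases y) auto
    have a: "V1 \<subseteq> V2 \<and> S1 \<subseteq> S2 \<union> LamS_V H V2 \<and> T1 \<subseteq> T2 \<union> LamT_V H V2"
      "V2 \<subseteq> V1 \<and> S2 \<subseteq> S1 \<union> LamS_V H V1 \<and> T2 \<subseteq> T1 \<union> LamT_V H V1"
      using that(1,2) xy by (auto simp add: AT_order_def at_le_simp)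
    have c: "S1 \<subseteq> LamQ H {KSfin, KSinf} V1" "T1 \<subseteq> LamQ H {KTfin, KTinf} V1"
      "S2 \<subseteq> LamQ H {KSfin, KSinf} V2" "T2 \<subseteq> LamQ H {KTfin, KTinf} V2"
      using that(3,4) xy by (auto simp add: AT_order_def AT_simp)
    have "V1 = V2" using a by auto
    then have "S1 = S2" "T1 = T2" using a c QS_disj[of H _ V2] by blast+
    then show ?thesis using xy \<open>V1 = V2\<close> by (simp add: AT_order_def)
  qed
  show "x \<sqsubseteq>\<^bsub>AT_order H\<^esub> z" if "x \<sqsubseteq>\<^bsub>AT_order H\<^esub> y" "y \<sqsubseteq>\<^bsub>AT_order H\<^esub> z"
    "x \<in> carrier (AT_order H)" "y \<in> carrier (AT_order H)" "z \<in> carrier (AT_order H)" for x y z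
  proof -
    obtain V1 S1 T1 V2 S2 T2 V3 S3 T3 where xy: "x = (V1, S1, T1)" "y = (V2, S2, T2)" "z = (V3, S3, T3)"
      by (cases x, cases y, cases z) auto
    have a: "V1 \<subseteq> V2 \<and> S1 \<subseteq> S2 \<union> LamS_V H V2 \<and> T1 \<subseteq> T2 \<union> LamT_V H V2"
      "V2 \<subseteq> V3 \<and> S2 \<subseteq> S3 \<union> LamS_V H V3 \<and> T2 \<subseteq> T3 \<union> LamT_V H V3"
      using that(1,2) xy by (auto simp add: AT_order_def at_le_simp)
    have c: "S1 \<subseteq> LamQ H {KSfin, KSinf} V1" "T1 \<subseteq> LamQ H {KTfin, KTinf} V1"
      using that(3) xy by (auto simp add: AT_order_def AT_simp)
    have "S1 \<subseteq> S3 \<union> LamS_V H V3"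
    proof
      fix l assume l: "l \<in> S1"
      show "l \<in> S3 \<union> LamS_V H V3"
      proof (cases "l \<in> S2")
        case True then show ?thesis using a by blast
      next
        case False then have "l \<in> LamS_V H V2" using a l by blast
        then show ?thesis using keyS[of l H V1 V2 V3] c l a by blast
      qed
    qed
    moreover have "T1 \<subseteq> T3 \<union> LamT_V H V3"
    proof
      fix l assume l: "l \<in> T1"
      show "l \<in> T3 \<union> LamT_V H V3"
      proof (cases "l \<in> T2")
        case True then show ?thesis using a by blast
      next
        case False then have "l \<in> LamT_V H V2" using a l by blast
        then show ?thesis using keyT[of l H V1 V2 V3] c l a by blast
      qed
    qed
    ultimately show ?thesis using a xy by (auto simp add: AT_order_def at_le_simp)
  qed
  show "x .=\<^bsub>AT_order H\<^esub> y \<Longrightarrow> z .=\<^bsub>AT_order H\<^esub> w \<Longrightarrow> x \<in> carrier (AT_order H) \<Longrightarrow> y \<in> carrier (AT_order H)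
    \<Longrightarrow> z \<in> carrier (AT_order H) \<Longrightarrow> w \<in> carrier (AT_order H) \<Longrightarrow> (x \<sqsubseteq>\<^bsub>AT_order H\<^esub> z) = (y \<sqsubseteq>\<^bsub>AT_order H\<^esub> w)" for x y z w
    by (simp add: AT_order_def)
  show "(.=\<^bsub>AT_order H\<^esub>) = (=)" by (simp add: AT_order_def)
qed


lemma Upper_AT: "Upper (AT_order H) A = {u \<in> AT H. \<forall>x\<in>A \<inter> AT H. at_le H x u}"
  unfolding Upper_def by (auto simp add: AT_order_def)

lemma Lower_AT: "Lower (AT_order H) A = {u \<in> AT H. \<forall>x\<in>A \<inter> AT H. at_le H u x}"
  unfolding Lower_def by (auto simp add: AT_order_def)

lemma sup_ex:
  assumes HB: "B_hypergraph H" and x: "(V1, S1, T1) \<in> AT H" and y: "(V2, S2, T2) \<in> AT H"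
  shows "\<exists>s. least (AT_order H) s (Upper (AT_order H) {(V1, S1, T1), (V2, S2, T2)})"
proof -
  define F where "F = {V. bisaturated H V \<and> V1 \<union> V2 \<subseteq> V}"
  define W where "W = \<Inter>F"
  define Sg where "Sg = (S1 \<union> S2) \<inter> LamQ H {KSfin, KSinf} W"
  define Th where "Th = (T1 \<union> T2) \<inter> LamQ H {KTfin, KTinf} W"
  have bx: "bisaturated H V1" "bisaturated H V2" using x y by (auto simp: AT_simp)
  have "bh_V H \<in> F" using V_bisat[OF HB] bx unfolding F_def bisaturated_def by auto
  then have Fne: "F \<noteq> {}" by blast
  have bW: "bisaturated H W" unfolding W_def by (rule bisat_Inter[OF Fne]) (auto simp: F_def)
  have sub: "V1 \<subseteq> W" "V2 \<subseteq> W" unfolding W_def F_def by auto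
  have sC: "(W, Sg, Th) \<in> AT H" using bW by (auto simp: AT_simp Sg_def Th_def)
  have le1: "at_le H (V1, S1, T1) (W, Sg, Th)"
    using sub QS_kind[of _ H V1 W] QT_kind[of _ H V1 W] x
    unfolding at_le_simp Sg_def Th_def AT_simp by blast
  have le2: "at_le H (V2, S2, T2) (W, Sg, Th)"
    using sub QS_kind[of _ H V2 W] QT_kind[of _ H V2 W] y
    unfolding at_le_simp Sg_def Th_def AT_simp by blast
  have least: "at_le H (W, Sg, Th) u" if u: "u \<in> Upper (AT_order H) {(V1, S1, T1), (V2, S2, T2)}" for u
  proof -
    obtain V' S' T' where uu: "u = (V', S', T')" by (cases u) auto
    have uc: "(V', S', T') \<in> AT H" and l1: "at_le H (V1, S1, T1) (V', S', T')"
      and l2: "at_le H (V2, S2, T2) (V', S', T')"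
      using u x y uu by (auto simp: Upper_AT)
    have "V' \<in> F" using uc l1 l2 unfolding F_def by (auto simp: AT_simp at_le_simp)
    then have "W \<subseteq> V'" unfolding W_def by blast
    moreover have "Sg \<subseteq> S' \<union> LamS_V H V'" "Th \<subseteq> T' \<union> LamT_V H V'"
      using l1 l2 unfolding at_le_simp Sg_def Th_def by blast+
    ultimately show ?thesis using uu by (simp add: at_le_simp)
  qed
  have "least (AT_order H) (W, Sg, Th) (Upper (AT_order H) {(V1, S1, T1), (V2, S2, T2)})"
    unfolding least_def
  proof (intro conjI ballI)
    show "Upper (AT_order H) {(V1, S1, T1), (V2, S2, T2)} \<subseteq> carrier (AT_order H)"
      by (rule Upper_closed)
    show "(W, Sg, Th) \<in> Upper (AT_order H) {(V1, S1, T1), (V2, S2, T2)}"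
      using sC le1 le2 by (auto simp: Upper_AT)
    show "(W, Sg, Th) \<sqsubseteq>\<^bsub>AT_order H\<^esub> u" if "u \<in> Upper (AT_order H) {(V1, S1, T1), (V2, S2, T2)}" for u
      using least[OF that] by (simp add: AT_order_def)
  qed
  then show ?thesis by blast
qed

lemma inf_ex:
  assumes x: "(V1, S1, T1) \<in> AT H" and y: "(V2, S2, T2) \<in> AT H"
  shows "\<exists>s. greatest (AT_order H) s (Lower (AT_order H) {(V1, S1, T1), (V2, S2, T2)})"
proof -
  define W where "W = V1 \<inter> V2"
  define Sg where "Sg = LamQ H {KSfin, KSinf} W \<inter> (S1 \<union> LamS_V H V1) \<inter> (S2 \<union> LamS_V H V2)"
  define Th where "Th = LamQ H {KTfin, KTinf} W \<inter> (T1 \<union> LamT_V H V1) \<inter> (T2 \<union> LamT_V H V2)"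
  have bx: "bisaturated H V1" "bisaturated H V2" using x y by (auto simp: AT_simp)
  have bW: "bisaturated H W" unfolding W_def by (rule bisat_Int[OF bx])
  have sC: "(W, Sg, Th) \<in> AT H" using bW by (auto simp: AT_simp Sg_def Th_def)
  have le1: "at_le H (W, Sg, Th) (V1, S1, T1)" "at_le H (W, Sg, Th) (V2, S2, T2)"
    unfolding at_le_simp by (auto simp: Sg_def Th_def W_def)
  have gr: "at_le H u (W, Sg, Th)" if u: "u \<in> Lower (AT_order H) {(V1, S1, T1), (V2, S2, T2)}" for u
  proof -
    obtain V' S' T' where uu: "u = (V', S', T')" by (cases u) auto
    have uc: "(V', S', T') \<in> AT H" and l1: "at_le H (V', S', T') (V1, S1, T1)"
      and l2: "at_le H (V', S', T') (V2, S2, T2)"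
      using u x y uu by (auto simp: Lower_AT)
    have VW: "V' \<subseteq> W" using l1 l2 unfolding W_def by (auto simp: at_le_simp)
    have qs: "S' \<subseteq> LamQ H {KSfin, KSinf} V'" "T' \<subseteq> LamQ H {KTfin, KTinf} V'"
      using uc by (auto simp: AT_simp)
    have "S' \<subseteq> Sg \<union> LamS_V H W"
    proof
      fix l assume l: "l \<in> S'"
      show "l \<in> Sg \<union> LamS_V H W"
      proof (cases "l \<in> LamQ H {KSfin, KSinf} W")
        case True then show ?thesis using l l1 l2 unfolding Sg_def at_le_simp by blast
      next
        case False then show ?thesis using QS_kind[of l H V' W] qs l by blast
      qed
    qed
    moreover have "T' \<subseteq> Th \<union> LamT_V H W"
    proof
      fix l assume l: "l \<in> T'"
      show "l \<in> Th \<union> LamT_V H W"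
      proof (cases "l \<in> LamQ H {KTfin, KTinf} W")
        case True then show ?thesis using l l1 l2 unfolding Th_def at_le_simp by blast
      next
        case False then show ?thesis using QT_kind[of l H V' W] qs l by blast
      qed
    qed
    ultimately show ?thesis using uu VW by (simp add: at_le_simp)
  qed
  have "greatest (AT_order H) (W, Sg, Th) (Lower (AT_order H) {(V1, S1, T1), (V2, S2, T2)})"
    unfolding greatest_def
  proof (intro conjI ballI)
    show "Lower (AT_order H) {(V1, S1, T1), (V2, S2, T2)} \<subseteq> carrier (AT_order H)"
      by (rule Lower_closed)
    show "(W, Sg, Th) \<in> Lower (AT_order H) {(V1, S1, T1), (V2, S2, T2)}"
      using sC le1 by (auto simp: Lower_AT)
    show "u \<sqsubseteq>\<^bsub>AT_order H\<^esub> (W, Sg, Th)" if "u \<in> Lower (AT_order H) {(V1, S1, T1), (V2, S2, T2)}" for u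
      using gr[OF that] by (simp add: AT_order_def)
  qed
  then show ?thesis by blast
qed

theorem mainTheorem8:
  fixes H :: "('v, 'e, 'l) bhyp"
  assumes "B_hypergraph H"
  shows "lattice (AT_order H)"
proof (intro lattice.intro upper_semilattice.intro lower_semilattice.intro po
    upper_semilattice_axioms.intro lower_semilattice_axioms.intro)
  fix x y assume xy: "x \<in> carrier (AT_order H)" "y \<in> carrier (AT_order H)"
  obtain V1 S1 T1 V2 S2 T2 where e: "x = (V1, S1, T1)" "y = (V2, S2, T2)" by (cases x, cases y) auto
  have c: "(V1, S1, T1) \<in> AT H" "(V2, S2, T2) \<in> AT H" using xy e by (auto simp: AT_order_def)
  show "\<exists>s. least (AT_order H) s (Upper (AT_order H) {x, y})"
    using sup_ex[OF assms c] e by simp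
  show "\<exists>s. greatest (AT_order H) s (Lower (AT_order H) {x, y})"
    using inf_ex[OF c] e by simp
qed

end
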